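(* Let $M$ be a canonical linear LV-SEM-ME satisfying Conventional faithfulness and Minimality, with mixing matrix $\mathbf W^*$. Then: (a) An mleaf variable and a measured cogent variable belong to the same ancestral ordered group if and only if the two rows of $\mathbf W^*$ corresponding to these variables have the same support. Further, for any cogent variable $V_i$ and any descendant $V_j$ of $V_i$, the support of the row of $V_i$ is a subset of the support of the row of $V_j$. (b) An unobserved variable and a cogent variable belong to the same ancestral ordered group if and only if the two columns of $\mathbf W^*$ corresponding to their exogenous noise terms have the same support. Further, for any cogent variable $V_i$ and any ancestor $V_j$ of $V_i$, the support of the column of $N_{V_i}$ is a subset of the support of the column of $N_{V_j}$.
   Context: Model. A linear LV-SEM-ME has a finite set of variables $\mathcal V$ and a set of measurements $\mathcal X$. The variables in $\mathcal V$ admit a causal order; each $V_i\in\mathcal V$ satisfies $V_i=\sum_{V_j\in Pa(V_i)} a_{ij}V_j+N_{V_i}$ with $Pa(V_i)\subseteq\mathcal V$ its direct parents and jointly independent exogenous noises. $\mathcal V$ is partitioned into $\mathcal Y$ (observed without error), $\mathcal Z$ (measured with error) and $\mathcal H$ (unobserved). Each $Z_i\in\mathcal Z$ has one measurement $X_i=Z_i+N_{X_i}$ with independent errors. The causal diagram is the DAG on $\mathcal V\cup\mathcal X$ with an edge $W_1\to W_2$ iff $W_1$ is a direct parent of $W_2$. An mleaf variable is a $Z_i\in\mathcal Z$ whose only child is $X_i$; $\mathcal Z^L$ is their set. A cogent variable is a variable of $\mathcal Z\cup\mathcal Y$ that is not mleaf; $\mathcal V^C$ is their set. The model is canonical if every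 $H\in\mathcal H$ has no parents and at least two children, and every mleaf variable has zero exogenous noise. Observability indicators record which observed coordinates are in $\mathcal Y$ and which in $\mathcal X$. Mixing matrices. $\mathbf W^*$ has rows indexed by $\mathcal Z\cup\mathcal Y$ and columns by the noises of $\mathcal H\cup\mathcal V^C$; the entry (row $V$, column $N_U$) is the total causal effect of $U$ on $V$ ($1$ if $U=V$). The overall mixing matrix $\mathbf W=[\mathbf W^*,\,[\mathbf I;\mathbf 0]]$ maps all independent noises (identity block = measurement errors) to $(X,Y)$. Assumptions. Conventional faithfulness: the total causal effect of any $V_i\in\mathcal V$ on any of its descendants is nonzero. Minimality: there is no other linear LV-SEM-ME with strictly fewer unobserved variables, the same observability indicators and the same mixing matrix up to permutation and scaling of columns. AOG. The ancestral ordered grouping is the partition of $\mathcal H\cup\mathcal Z^L\cup\mathcal V^C$: each cogent variable in its own group; each mleaf $Z_j$ that has a measured cogent parent $Z_i$ such that $Z_j$ has no other parents or all other parents of $Z_j$ are ancestors of $Z_i$ is put in the group of $Z_i$, otherwise in a separate group; each $H_j\in\mathcal H$ that has a cogent child $V_i$ such that all other children of $H_j$ are descendants of $V_i$ is put in the group of $V_i$, otherwise in a separate group. The groups are called ancestral ordered groups. *)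

theory Defs
  imports Complex_Main
begin

text \<open>Variables live in a type 'v.
  vars: the finite set V of variables; hid = H (unobserved), meas = Z (measured
  with error; each z in Z has its own measurement X_z, identified by the label z),
  obs = Y (observed without error).  par v = direct parents of v;
  coef j i = structural coefficient a_ij of parent j in the equation of i;
  zero_noise = set of variables whose exogenous noise is identically zero.\<close>

record 'v lvsem =
  vars :: "'v set"
  hid :: "'v set"
  meas :: "'v set"
  obs :: "'v set"
  par :: "'v \<Rightarrow> 'v set"
  coef :: "'v \<Rightarrow> 'v \<Rightarrow> real"
  zero_noise :: "'v set"

definition edges :: "'v lvsem \<Rightarrow> ('v \<times> 'v) set" where
  "edges M = {(u, w). w \<in> vars M \<and> u \<in> par M w}"

definition wf_model :: "'v lvsem \<Rightarrow> bool" where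
  "wf_model M \<longleftrightarrow> finite (vars M)
     \<and> vars M = hid M \<union> meas M \<union> obs M
     \<and> hid M \<inter> meas M = {} \<and> hid M \<inter> obs M = {} \<and> meas M \<inter> obs M = {}
     \<and> (\<forall>v \<in> vars M. par M v \<subseteq> vars M)
     \<and> (\<forall>v. v \<notin> vars M \<longrightarrow> par M v = {})
     \<and> zero_noise M \<subseteq> vars M
     \<and> acyclic (edges M)"

definition children :: "'v lvsem \<Rightarrow> 'v \<Rightarrow> 'v set" where
  "children M u = {w \<in> vars M. u \<in> par M w}"

definition is_desc :: "'v lvsem \<Rightarrow> 'v \<Rightarrow> 'v \<Rightarrow> bool" where
  "is_desc M u w \<longleftrightarrow> (u, w) \<in> (edges M)\<^sup>+"

text \<open>mleaf: measured variable whose only child (in the diagram) is its measurement,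
  i.e. it has no children among the variables V.\<close>
definition mleaf :: "'v lvsem \<Rightarrow> 'v set" where
  "mleaf M = {z \<in> meas M. children M z = {}}"

definition cogent :: "'v lvsem \<Rightarrow> 'v set" where
  "cogent M = (meas M \<union> obs M) - mleaf M"

definition dpaths :: "'v lvsem \<Rightarrow> 'v \<Rightarrow> 'v \<Rightarrow> 'v list set" where
  "dpaths M u w = {p. p \<noteq> [] \<and> distinct p \<and> set p \<subseteq> vars M
      \<and> (\<forall>i. Suc i < length p \<longrightarrow> p ! i \<in> par M (p ! Suc i))
      \<and> hd p = u \<and> last p = w}"

definition te :: "'v lvsem \<Rightarrow> 'v \<Rightarrow> 'v \<Rightarrow> real" where
  "te M u w = (\<Sum>p \<in> dpaths M u w. \<Prod>i < length p - 1. coef M (p ! i) (p ! Suc i))"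

text \<open>Rows of W* are indexed by Z \<union> Y, columns by the noises N_u, u \<in> H \<union> V^C.\<close>
definition wcols :: "'v lvsem \<Rightarrow> 'v set" where
  "wcols M = hid M \<union> cogent M"

definition row_supp :: "'v lvsem \<Rightarrow> 'v \<Rightarrow> 'v set" where
  "row_supp M v = {u \<in> wcols M. te M u v \<noteq> 0}"

definition col_supp :: "'v lvsem \<Rightarrow> 'v \<Rightarrow> 'v set" where
  "col_supp M u = {r \<in> meas M \<union> obs M. te M u r \<noteq> 0}"

text \<open>Overall mixing matrix W = [W*, [I;0]]: columns Inl u (noise N_u, u in H \<union> V^C)
  and Inr z (measurement error of X_z, z in Z); rows indexed by Z \<union> Y.\<close>
definition mix_cols :: "'v lvsem \<Rightarrow> ('v + 'v) set" where
  "mix_cols M = Inl ` wcols M \<union> Inr ` meas M"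

definition mix_entry :: "'v lvsem \<Rightarrow> 'v \<Rightarrow> ('v + 'v) \<Rightarrow> real" where
  "mix_entry M r k = (case k of Inl u \<Rightarrow> te M u r
                               | Inr z \<Rightarrow> (if r = z then 1 else 0))"

text \<open>Same mixing matrix up to permutation and (nonzero) scaling of columns; both models
  have the same observed coordinates (same Z, same Y), so rows are identified.\<close>
definition same_mixing_upto :: "'v lvsem \<Rightarrow> 'v lvsem \<Rightarrow> bool" where
  "same_mixing_upto M M' \<longleftrightarrow>
     (\<exists>\<sigma> c. bij_betw \<sigma> (mix_cols M) (mix_cols M')
        \<and> (\<forall>k \<in> mix_cols M. c k \<noteq> (0::real)
              \<and> (\<forall>r \<in> meas M \<union> obs M. mix_entry M' r (\<sigma> k) = c k * mix_entry M r k)))"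

definition canonical :: "'v lvsem \<Rightarrow> bool" where
  "canonical M \<longleftrightarrow> (\<forall>h \<in> hid M. par M h = {} \<and> card (children M h) \<ge> 2)
                   \<and> mleaf M \<subseteq> zero_noise M"

definition conv_faithful :: "'v lvsem \<Rightarrow> bool" where
  "conv_faithful M \<longleftrightarrow> (\<forall>u \<in> vars M. \<forall>w. is_desc M u w \<longrightarrow> te M u w \<noteq> 0)"

definition minimal :: "'v lvsem \<Rightarrow> bool" where
  "minimal M \<longleftrightarrow> \<not> (\<exists>M'. wf_model M' \<and> meas M' = meas M \<and> obs M' = obs M
                        \<and> card (hid M') < card (hid M) \<and> same_mixing_upto M M')"

text \<open>AOG: w (mleaf or unobserved) is put into the group of cogent variable c.\<close>
definition attached :: "'v lvsem \<Rightarrow> 'v \<Rightarrow> 'v \<Rightarrow> bool" where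
  "attached M w c \<longleftrightarrow> c \<in> cogent M \<and>
     ((w \<in> mleaf M \<and> c \<in> meas M \<and> c \<in> par M w
        \<and> (\<forall>p \<in> par M w. p \<noteq> c \<longrightarrow> is_desc M p c))
    \<or> (w \<in> hid M \<and> c \<in> children M w
        \<and> (\<forall>d \<in> children M w. d \<noteq> c \<longrightarrow> is_desc M c d)))"

definition same_aog :: "'v lvsem \<Rightarrow> 'v \<Rightarrow> 'v \<Rightarrow> bool" where
  "same_aog M a b \<longleftrightarrow> a = b \<or>
     (\<exists>c \<in> cogent M. (a = c \<or> attached M a c) \<and> (b = c \<or> attached M b c))"

end

theory Submission
  imports Defs
begin

lemma par_vars:
  assumes wf: "wf_model M" and p: "u \<in> par M w"
  shows "u \<in> vars M \<and> w \<in> vars M"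
proof -
  have a: "\<forall>v \<in> vars M. par M v \<subseteq> vars M" "\<forall>v. v \<notin> vars M \<longrightarrow> par M v = {}"
    using wf unfolding wf_model_def by blast+
  then show ?thesis using p by blast
qed

lemma desc_vars:
  assumes wf: "wf_model M" and d: "is_desc M u w"
  shows "u \<in> vars M \<and> w \<in> vars M"
proof -
  have "(u, w) \<in> (edges M)\<^sup>+" using d by (simp add: is_desc_def)
  then show ?thesis
  proof (induction rule: trancl.induct)
    case (r_into_trancl a b)
    then show ?case using par_vars[OF wf] by (auto simp: edges_def)
  next
    case (trancl_into_trancl a b c)
    then show ?case using par_vars[OF wf] by (auto simp: edges_def)
  qed
qed

lemma path_rtrancl:
  "p \<noteq> [] \<Longrightarrow> set p \<subseteq> vars M \<Longrightarrow> (\<forall>i. Suc i < length p \<longrightarrow> p!i \<in> par M (p!Suc i))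
   \<Longrightarrow> (hd p, last p) \<in> (edges M)\<^sup>*"
proof (induction p)
  case Nil
  then show ?case by simp
next
  case (Cons a p)
  show ?case
  proof (cases "p = []")
    case True
    then show ?thesis by simp
  next
    case False
    have "a \<in> par M (p!0)" using Cons.prems(3)[rule_format, of 0] False by simp
    moreover have "hd p = p!0" using False by (simp add: hd_conv_nth)
    moreover have "hd p \<in> vars M" using Cons.prems(2) False by auto
    ultimately have e: "(a, hd p) \<in> edges M" by (simp add: edges_def)
    have "\<forall>i. Suc i < length p \<longrightarrow> p!i \<in> par M (p!Suc i)"
    proof (intro allI impI)
      fix i assume "Suc i < length p"
      then show "p!i \<in> par M (p!Suc i)" using Cons.prems(3)[rule_format, of "Suc i"] by simp
    qed
    then have "(hd p, last p) \<in> (edges M)\<^sup>*" using Cons.IH False Cons.prems(2) by auto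
    then show ?thesis using e False by (simp add: converse_rtrancl_into_rtrancl)
  qed
qed

lemma te_nz_imp:
  assumes wf: "wf_model M" and nz: "te M u w \<noteq> 0"
  shows "(u = w \<and> u \<in> vars M) \<or> is_desc M u w"
proof -
  have "dpaths M u w \<noteq> {}" using nz by (auto simp: te_def)
  then obtain p where p: "p \<in> dpaths M u w" by blast
  then have pp: "p \<noteq> []" "set p \<subseteq> vars M" "\<forall>i. Suc i < length p \<longrightarrow> p!i \<in> par M (p!Suc i)"
    "hd p = u" "last p = w" by (auto simp: dpaths_def)
  have r: "(u, w) \<in> (edges M)\<^sup>*" using path_rtrancl[OF pp(1-3)] pp(4,5) by simp
  have "u \<in> vars M" using pp by auto
  then show ?thesis using r by (auto simp: is_desc_def dest: rtranclD)
qed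

lemma dpaths_self:
  assumes "u \<in> vars M"
  shows "dpaths M u u = {[u]}"
proof
  show "{[u]} \<subseteq> dpaths M u u" using assms by (simp add: dpaths_def)
next
  show "dpaths M u u \<subseteq> {[u]}"
  proof
    fix p assume "p \<in> dpaths M u u"
    then have pp: "p \<noteq> []" "distinct p" "hd p = u" "last p = u" by (auto simp: dpaths_def)
    then obtain q where q: "p = u # q" by (cases p) auto
    have "q = []"
    proof (rule ccontr)
      assume "q \<noteq> []"
      then have "last q = u" "last q \<in> set q" using pp q by auto
      then show False using pp q by auto
    qed
    then show "p \<in> {[u]}" using q by simp
  qed
qed

lemma te_self: "u \<in> vars M \<Longrightarrow> te M u u = 1"
  by (simp add: te_def dpaths_self)

lemma te_nz_iff:
  assumes wf: "wf_model M" and cf: "conv_faithful M"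
  shows "te M u w \<noteq> 0 \<longleftrightarrow> (u = w \<and> u \<in> vars M) \<or> is_desc M u w"
  using te_nz_imp[OF wf] te_self desc_vars[OF wf] cf unfolding conv_faithful_def by fastforce

lemma desc_trans: "is_desc M a b \<Longrightarrow> is_desc M b c \<Longrightarrow> is_desc M a c"
  by (simp add: is_desc_def)

lemma desc_irrefl: "wf_model M \<Longrightarrow> \<not> is_desc M a a"
  by (simp add: is_desc_def wf_model_def acyclic_def)

lemma desc_last:
  "is_desc M u z \<Longrightarrow> \<exists>p \<in> par M z. u = p \<or> is_desc M u p"
  unfolding is_desc_def by (erule tranclE) (auto simp: edges_def)

lemma desc_first:
  "is_desc M h r \<Longrightarrow> \<exists>d \<in> children M h. d = r \<or> is_desc M d r"
  unfolding is_desc_def by (erule converse_tranclE) (auto simp: edges_def children_def)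

lemma edge_desc: "w \<in> vars M \<Longrightarrow> u \<in> par M w \<Longrightarrow> is_desc M u w"
  by (auto simp: is_desc_def edges_def)


theorem proposition4:
  fixes M :: "'v lvsem"
  assumes "wf_model M" and "canonical M" and "conv_faithful M" and "minimal M"
  shows "(\<forall>z \<in> mleaf M. \<forall>v \<in> cogent M \<inter> meas M.
            same_aog M z v \<longleftrightarrow> row_supp M z = row_supp M v)
       \<and> (\<forall>vi \<in> cogent M. \<forall>vj. is_desc M vi vj \<longrightarrow> row_supp M vi \<subseteq> row_supp M vj)
       \<and> (\<forall>h \<in> hid M. \<forall>v \<in> cogent M.
            same_aog M h v \<longleftrightarrow> col_supp M h = col_supp M v)
       \<and> (\<forall>vi \<in> cogent M. \<forall>vj. is_desc M vj vi \<longrightarrow> col_supp M vi \<subseteq> col_supp M vj)"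
proof -
  note wf = assms(1)
  have T: "\<And>u w. te M u w \<noteq> 0 \<longleftrightarrow> (u = w \<and> u \<in> vars M) \<or> is_desc M u w"
    using te_nz_iff[OF assms(1) assms(3)] .
  have V: "vars M = hid M \<union> meas M \<union> obs M" "hid M \<inter> meas M = {}" "hid M \<inter> obs M = {}"
    using wf unfolding wf_model_def by blast+
  have ml: "mleaf M \<subseteq> meas M" by (auto simp: mleaf_def)
  have cog: "cogent M = (meas M \<union> obs M) - mleaf M" by (simp add: cogent_def)
  have hidnp: "\<And>h. h \<in> hid M \<Longrightarrow> par M h = {}" using assms(2) by (simp add: canonical_def)
  have parnml: "\<And>p w. w \<in> vars M \<Longrightarrow> p \<in> par M w \<Longrightarrow> p \<notin> mleaf M"
    by (auto simp: mleaf_def children_def)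
  have irr: "\<And>a. \<not> is_desc M a a" using desc_irrefl[OF wf] .
  have P1: "\<forall>z \<in> mleaf M. \<forall>v \<in> cogent M \<inter> meas M.
            same_aog M z v \<longleftrightarrow> row_supp M z = row_supp M v"
  proof (intro ballI)
    fix z v assume z: "z \<in> mleaf M" and v: "v \<in> cogent M \<inter> meas M"
    have zv: "z \<in> vars M" "z \<notin> hid M" "z \<notin> cogent M" "z \<notin> wcols M"
      using z ml V by (auto simp: cog wcols_def)
    have vv: "v \<in> vars M" "v \<notin> hid M" "v \<notin> mleaf M" "v \<in> wcols M" "v \<in> meas M" "v \<in> cogent M"
      using v V by (auto simp: cog wcols_def)
    have nch: "children M z = {}" using z by (simp add: mleaf_def)
    have pw: "\<And>p. p \<in> par M z \<Longrightarrow> p \<in> wcols M"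
    proof -
      fix p assume p: "p \<in> par M z"
      have "p \<in> vars M" using par_vars[OF wf p] by blast
      moreover have "p \<notin> mleaf M" using parnml[OF zv(1) p] .
      ultimately show "p \<in> wcols M" using V by (auto simp: wcols_def cog)
    qed
    have same: "same_aog M z v \<longleftrightarrow> attached M z v"
    proof
      assume "same_aog M z v"
      then obtain c where c: "c \<in> cogent M" "z = c \<or> attached M z c" "v = c \<or> attached M v c"
        using zv vv by (auto simp: same_aog_def)
      have "v = c" using c(3) vv by (auto simp: attached_def)
      moreover have "z \<noteq> c" using c(1) zv by auto
      ultimately show "attached M z v" using c by simp
    next
      assume "attached M z v" then show "same_aog M z v" using vv by (auto simp: same_aog_def)
    qed
    have att: "attached M z v \<longleftrightarrow> v \<in> par M z \<and> (\<forall>p \<in> par M z. p \<noteq> v \<longrightarrow> is_desc M p v)"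
      using z zv(2) vv(5,6) by (simp add: attached_def)
    have rz: "row_supp M z = {u \<in> wcols M. is_desc M u z}"
      using zv by (auto simp: row_supp_def T)
    have rv: "row_supp M v = {u \<in> wcols M. u = v \<or> is_desc M u v}"
      using vv by (auto simp: row_supp_def T)
    show "same_aog M z v \<longleftrightarrow> row_supp M z = row_supp M v"
    proof
      assume "same_aog M z v"
      then have "attached M z v" using same by blast
      then have a: "v \<in> par M z" "\<forall>p \<in> par M z. p \<noteq> v \<longrightarrow> is_desc M p v" using att by blast+
      have "\<And>u. is_desc M u z \<longleftrightarrow> u = v \<or> is_desc M u v"
      proof
        fix u assume "is_desc M u z"
        then obtain p where p: "p \<in> par M z" "u = p \<or> is_desc M u p" by (blast dest: desc_last)
        show "u = v \<or> is_desc M u v"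
        proof (cases "p = v")
          case True
          then show ?thesis using p(2) by blast
        next
          case False
          then have "is_desc M p v" using a(2) p(1) by blast
          then show ?thesis using p(2) desc_trans[of M u p v] by blast
        qed
      next
        fix u assume "u = v \<or> is_desc M u v"
        moreover have "is_desc M v z" using edge_desc[OF zv(1) a(1)] .
        ultimately show "is_desc M u z" using desc_trans[of M u v z] by auto
      qed
      then show "row_supp M z = row_supp M v" using rz rv by auto
    next
      assume eq: "row_supp M z = row_supp M v"
      have "v \<in> row_supp M v" using rv vv by simp
      then have "v \<in> row_supp M z" unfolding eq .
      then have vz: "is_desc M v z" unfolding rz by blast
      have allp: "\<forall>p \<in> par M z. p = v \<or> is_desc M p v"
      proof
        fix p assume p: "p \<in> par M z"
        have "p \<in> row_supp M z" using rz pw[OF p] edge_desc[OF zv(1) p] by simp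
        then have "p \<in> row_supp M v" unfolding eq .
        then show "p = v \<or> is_desc M p v" unfolding rv by blast
      qed
      obtain p where p: "p \<in> par M z" "v = p \<or> is_desc M v p" using desc_last[OF vz] by blast
      have "v \<in> par M z"
      proof (cases "v = p")
        case True then show ?thesis using p by simp
      next
        case False
        then have "is_desc M v p" "is_desc M p v" using p allp by auto
        then show ?thesis using irr[of v] desc_trans[of M v p v] by simp
      qed
      then have "attached M z v" using att allp by auto
      then show "same_aog M z v" using same by simp
    qed
  qed
  have P2: "\<forall>vi \<in> cogent M. \<forall>vj. is_desc M vi vj \<longrightarrow> row_supp M vi \<subseteq> row_supp M vj"
  proof (intro ballI allI impI subsetI)
    fix vi vj u assume vi: "vi \<in> cogent M" and d: "is_desc M vi vj" and u: "u \<in> row_supp M vi"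
    have "u \<in> wcols M" "(u = vi \<and> u \<in> vars M) \<or> is_desc M u vi" using u by (auto simp: row_supp_def T)
    then have "is_desc M u vj" using d desc_trans[of M u vi vj] by auto
    then show "u \<in> row_supp M vj" using \<open>u \<in> wcols M\<close> by (simp add: row_supp_def T)
  qed
  have P3: "\<forall>h \<in> hid M. \<forall>v \<in> cogent M.
            same_aog M h v \<longleftrightarrow> col_supp M h = col_supp M v"
  proof (intro ballI)
    fix h v assume h: "h \<in> hid M" and v: "v \<in> cogent M"
    have hv: "h \<in> vars M" "h \<notin> meas M \<union> obs M" "h \<notin> cogent M" "h \<notin> mleaf M"
      using h V ml by (auto simp: cog)
    have vv: "v \<in> vars M" "v \<notin> hid M" "v \<notin> mleaf M" "v \<in> meas M \<union> obs M"
      using v V by (auto simp: cog)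
    have chm: "\<And>d. d \<in> children M h \<Longrightarrow> d \<in> meas M \<union> obs M"
    proof -
      fix d assume "d \<in> children M h"
      then have "d \<in> vars M" "h \<in> par M d" by (auto simp: children_def)
      then show "d \<in> meas M \<union> obs M" using hidnp V by auto
    qed
    have same: "same_aog M h v \<longleftrightarrow> attached M h v"
    proof
      assume "same_aog M h v"
      then obtain c where c: "c \<in> cogent M" "h = c \<or> attached M h c" "v = c \<or> attached M v c"
        using hv vv by (auto simp: same_aog_def)
      have "v = c" using c(3) vv by (auto simp: attached_def)
      moreover have "h \<noteq> c" using c(1) hv by auto
      ultimately show "attached M h v" using c by simp
    next
      assume "attached M h v" then show "same_aog M h v" using v by (auto simp: same_aog_def)
    qed
    have att: "attached M h v \<longleftrightarrow> v \<in> children M h \<and> (\<forall>d \<in> children M h. d \<noteq> v \<longrightarrow> is_desc M v d)"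
      using h v hv(4) by (simp add: attached_def)
    have ch: "col_supp M h = {r \<in> meas M \<union> obs M. is_desc M h r}"
      using hv by (auto simp: col_supp_def T)
    have cv: "col_supp M v = {r \<in> meas M \<union> obs M. r = v \<or> is_desc M v r}"
      using vv by (auto simp: col_supp_def T)
    have cd: "\<And>d. d \<in> children M h \<Longrightarrow> is_desc M h d"
      by (auto simp: children_def edge_desc)
    show "same_aog M h v \<longleftrightarrow> col_supp M h = col_supp M v"
    proof
      assume "same_aog M h v"
      then have "attached M h v" using same by blast
      then have a: "v \<in> children M h" "\<forall>d \<in> children M h. d \<noteq> v \<longrightarrow> is_desc M v d" using att by blast+
      have "\<And>r. is_desc M h r \<longleftrightarrow> r = v \<or> is_desc M v r"
      proof
        fix r assume "is_desc M h r"
        then obtain d where d: "d \<in> children M h" "d = r \<or> is_desc M d r" by (blast dest: desc_first)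
        show "r = v \<or> is_desc M v r"
        proof (cases "d = v")
          case True
          then show ?thesis using d(2) by blast
        next
          case False
          then have "is_desc M v d" using a(2) d(1) by blast
          then show ?thesis using d(2) desc_trans[of M v d r] by blast
        qed
      next
        fix r assume "r = v \<or> is_desc M v r"
        moreover have "is_desc M h v" using cd[OF a(1)] .
        ultimately show "is_desc M h r" using desc_trans[of M h v r] by auto
      qed
      then show "col_supp M h = col_supp M v" using ch cv by auto
    next
      assume eq: "col_supp M h = col_supp M v"
      have "v \<in> col_supp M v" using cv vv by simp
      then have "v \<in> col_supp M h" unfolding eq .
      then have hvd: "is_desc M h v" unfolding ch by blast
      have alld: "\<forall>d \<in> children M h. d = v \<or> is_desc M v d"
      proof
        fix d assume d: "d \<in> children M h"
        have "d \<in> col_supp M h" using ch chm[OF d] cd[OF d] by simp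
        then have "d \<in> col_supp M v" unfolding eq .
        then show "d = v \<or> is_desc M v d" unfolding cv by blast
      qed
      obtain d where d: "d \<in> children M h" "d = v \<or> is_desc M d v" using desc_first[OF hvd] by blast
      have "v \<in> children M h"
      proof (cases "d = v")
        case True then show ?thesis using d by simp
      next
        case False
        then have "is_desc M v d" "is_desc M d v" using d alld by auto
        then show ?thesis using irr[of v] desc_trans[of M v d v] by simp
      qed
      then have "attached M h v" using att alld by auto
      then show "same_aog M h v" using same by simp
    qed
  qed
  have P4: "\<forall>vi \<in> cogent M. \<forall>vj. is_desc M vj vi \<longrightarrow> col_supp M vi \<subseteq> col_supp M vj"
  proof (intro ballI allI impI subsetI)
    fix vi vj r assume vi: "vi \<in> cogent M" and d: "is_desc M vj vi" and r: "r \<in> col_supp M vi"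
    have "r \<in> meas M \<union> obs M" "(vi = r \<and> vi \<in> vars M) \<or> is_desc M vi r" using r by (auto simp: col_supp_def T)
    then have "is_desc M vj r" using d desc_trans[of M vj vi r] by auto
    then show "r \<in> col_supp M vj" using \<open>r \<in> meas M \<union> obs M\<close> by (simp add: col_supp_def T)
  qed
  show ?thesis using P1 P2 P3 P4 by blast
qed

end
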